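(* Let $b$ be a positive integer. The Frobenius endomorphism $F_b:\mathbb Z[1/b][q]^{\mathbb N_b}\to\mathbb Z[1/b][q]^{\mathbb N_b}$, induced by $q\mapsto q^b$, is a well-defined algebra isomorphism.
   Context: $\mathbb N_b=\{n\in\mathbb N:(n,b)=1\}$. For $S\subset\mathbb N$, $\mathbb Z[1/b][q]^S=\varprojlim_{f\in\Phi^*_S}\mathbb Z[1/b][q]/(f)$, where $\Phi^*_S$ is the multiplicative set generated by the cyclotomic polynomials $\Phi_n(q)$, $n\in S$, directed by divisibility. $F_b$ is the inverse limit of the maps $\mathbb Z[1/b][q]/(\prod_i\Phi_{n_i}^{k_i})\to\mathbb Z[1/b][q]/(\prod_i\Phi_{n_i}^{k_i})$, $q\mapsto q^b$, for finitely many $n_i\in\mathbb N_b$, $k_i\in\mathbb N$. *)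

theory Defs
  imports "HOL-Computational_Algebra.Computational_Algebra"
begin

text \<open>Cyclotomic polynomials over the rationals, via the standard recursion
  q^n - 1 = prod over d dvd n of Phi_d (for n \<ge> 1; Phi_0 is a dummy value 1).\<close>
function cyclo :: "nat \<Rightarrow> rat poly" where
  "cyclo n = (if n = 0 then 1
              else (monom 1 n - 1) div (\<Prod>d\<in>{d. d dvd n \<and> d < n}. cyclo d))"
  by pat_completeness auto
termination
  by (relation "measure id") auto

declare cyclo.simps[simp del]

definition Nb :: "nat \<Rightarrow> nat set" where
  "Nb b = {n. n \<ge> 1 \<and> coprime n b}"

definition Zb :: "nat \<Rightarrow> rat set" where
  "Zb b = {r. \<exists>(a::int) (k::nat). r = of_int a / of_nat (b ^ k)}"

definition Zbq :: "nat \<Rightarrow> rat poly set" where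
  "Zbq b = {p. \<forall>i. coeff p i \<in> Zb b}"

definition dvdb :: "nat \<Rightarrow> rat poly \<Rightarrow> rat poly \<Rightarrow> bool" where
  "dvdb b f p \<longleftrightarrow> (\<exists>h\<in>Zbq b. p = f * h)"

definition PhiStar :: "nat set \<Rightarrow> rat poly set" where
  "PhiStar S = {f. \<exists>ns. set ns \<subseteq> S \<and> f = prod_list (map cyclo ns)}"

text \<open>Elements of the inverse limit Z[1/b][q]^S: compatible families
  (x_f)_{f in Phi*_S} with x_f in Z[1/b][q] representing a class mod (f);
  the transition maps for f | g are reduction mod f.\<close>
definition invlim :: "nat \<Rightarrow> nat set \<Rightarrow> (rat poly \<Rightarrow> rat poly) set" where
  "invlim b S = {x. (\<forall>f\<in>PhiStar S. x f \<in> Zbq b) \<and>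
     (\<forall>f\<in>PhiStar S. \<forall>g\<in>PhiStar S. dvdb b f g \<longrightarrow> dvdb b f (x g - x f))}"

definition limeq :: "nat \<Rightarrow> nat set \<Rightarrow> (rat poly \<Rightarrow> rat poly) \<Rightarrow> (rat poly \<Rightarrow> rat poly) \<Rightarrow> bool" where
  "limeq b S x y \<longleftrightarrow> (\<forall>f\<in>PhiStar S. dvdb b f (x f - y f))"

definition frob_poly :: "nat \<Rightarrow> rat poly \<Rightarrow> rat poly" where
  "frob_poly b p = pcompose p (monom 1 b)"

definition Frob :: "nat \<Rightarrow> (rat poly \<Rightarrow> rat poly) \<Rightarrow> (rat poly \<Rightarrow> rat poly)" where
  "Frob b x = (\<lambda>f. frob_poly b (x f))"

end

theory Submission
  imports Defs
begin

section \<open>Z[1/b]\<close>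

lemma Zb_int: "of_int a \<in> Zb b"
  unfolding Zb_def by (rule CollectI, rule exI[of _ a], rule exI[of _ 0]) simp

lemma Zb_0: "0 \<in> Zb b" using Zb_int[of 0] by simp
lemma Zb_1: "1 \<in> Zb b" using Zb_int[of 1] by simp

lemma Zb_add: assumes "b \<ge> 1" "x \<in> Zb b" "y \<in> Zb b" shows "x + y \<in> Zb b"
proof -
  obtain a k where x: "x = of_int a / of_nat (b^k)" using assms unfolding Zb_def by auto
  obtain c l where y: "y = of_int c / of_nat (b^l)" using assms unfolding Zb_def by auto
  have "x + y = of_int (a * int (b^l) + c * int (b^k)) / of_nat (b^(k+l))"
    using assms(1) by (simp add: x y field_simps power_add)
  thus ?thesis unfolding Zb_def by blast
qed

lemma Zb_mult: assumes "b \<ge> 1" "x \<in> Zb b" "y \<in> Zb b" shows "x * y \<in> Zb b"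
proof -
  obtain a k where x: "x = of_int a / of_nat (b^k)" using assms unfolding Zb_def by auto
  obtain c l where y: "y = of_int c / of_nat (b^l)" using assms unfolding Zb_def by auto
  have "x * y = of_int (a * c) / of_nat (b^(k+l))"
    using assms(1) by (simp add: x y field_simps power_add)
  thus ?thesis unfolding Zb_def by blast
qed

lemma Zb_uminus: assumes "x \<in> Zb b" shows "- x \<in> Zb b"
proof -
  obtain a k where x: "x = of_int a / of_nat (b^k)" using assms unfolding Zb_def by auto
  have "- x = of_int (- a) / of_nat (b^k)" by (simp add: x)
  thus ?thesis unfolding Zb_def by blast
qed

lemma Zb_diff: assumes "b \<ge> 1" "x \<in> Zb b" "y \<in> Zb b" shows "x - y \<in> Zb b"
  using Zb_add[OF assms(1,2) Zb_uminus[OF assms(3)]] by simp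

lemma Zb_div: assumes "b \<ge> 1" "x \<in> Zb b" shows "x / of_nat b ^ K \<in> Zb b"
proof -
  obtain a k where x: "x = of_int a / of_nat (b^k)" using assms unfolding Zb_def by auto
  have "x / of_nat b ^ K = of_int a / of_nat (b^(k+K))"
    using assms(1) by (simp add: x field_simps power_add)
  thus ?thesis unfolding Zb_def by blast
qed

lemma Zb1_sub: "x \<in> Zb 1 \<Longrightarrow> x \<in> Zb b"
  unfolding Zb_def by (auto intro: Zb_int[unfolded Zb_def, simplified])

lemma Zbq_iff: "p \<in> Zbq b \<longleftrightarrow> (\<forall>i. coeff p i \<in> Zb b)" unfolding Zbq_def by simp

lemma Zbq_0: "0 \<in> Zbq b" by (simp add: Zbq_iff Zb_0)
lemma Zbq_1: "1 \<in> Zbq b" by (simp add: Zbq_iff Zb_0 Zb_1 coeff_1)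
lemma Zbq_const: "c \<in> Zb b \<Longrightarrow> [:c:] \<in> Zbq b"
  by (auto simp: Zbq_iff Zb_0 coeff_pCons split: nat.splits)
lemma Zbq_pCons: "c \<in> Zb b \<Longrightarrow> p \<in> Zbq b \<Longrightarrow> pCons c p \<in> Zbq b"
  by (auto simp: Zbq_iff coeff_pCons split: nat.splits)
lemma Zbq_monom: "c \<in> Zb b \<Longrightarrow> monom c n \<in> Zbq b"
  by (auto simp: Zbq_iff Zb_0 coeff_monom)
lemma Zbq_add: "b \<ge> 1 \<Longrightarrow> p \<in> Zbq b \<Longrightarrow> q \<in> Zbq b \<Longrightarrow> p + q \<in> Zbq b"
  by (auto simp: Zbq_iff intro: Zb_add)
lemma Zbq_uminus: "p \<in> Zbq b \<Longrightarrow> - p \<in> Zbq b"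
  by (auto simp: Zbq_iff intro: Zb_uminus)
lemma Zbq_diff: "b \<ge> 1 \<Longrightarrow> p \<in> Zbq b \<Longrightarrow> q \<in> Zbq b \<Longrightarrow> p - q \<in> Zbq b"
  by (auto simp: Zbq_iff intro: Zb_diff)
lemma Zbq_mult: "b \<ge> 1 \<Longrightarrow> p \<in> Zbq b \<Longrightarrow> q \<in> Zbq b \<Longrightarrow> p * q \<in> Zbq b"
  unfolding Zbq_iff
  by (intro allI coeff_mult_semiring_closed[of "Zb b"]) (auto intro: Zb_0 Zb_add Zb_mult)
lemma Zbq_pcompose: "b \<ge> 1 \<Longrightarrow> p \<in> Zbq b \<Longrightarrow> q \<in> Zbq b \<Longrightarrow> pcompose p q \<in> Zbq b"
  unfolding Zbq_iff
  by (intro allI coeff_pcompose_semiring_closed[of "Zb b"]) (auto intro: Zb_0 Zb_add Zb_mult)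
lemma Zbq_smult: "b \<ge> 1 \<Longrightarrow> c \<in> Zb b \<Longrightarrow> p \<in> Zbq b \<Longrightarrow> smult c p \<in> Zbq b"
  by (auto simp: Zbq_iff intro: Zb_mult)
lemma Zbq_power: "b \<ge> 1 \<Longrightarrow> p \<in> Zbq b \<Longrightarrow> p ^ n \<in> Zbq b"
  by (induction n) (auto intro: Zbq_1 Zbq_mult)
lemma Zbq_sum: "b \<ge> 1 \<Longrightarrow> (\<And>i. i \<in> A \<Longrightarrow> f i \<in> Zbq b) \<Longrightarrow> sum f A \<in> Zbq b"
  by (induction A rule: infinite_finite_induct) (auto intro: Zbq_0 Zbq_add)
lemma Zbq_prod: "b \<ge> 1 \<Longrightarrow> (\<And>i. i \<in> A \<Longrightarrow> f i \<in> Zbq b) \<Longrightarrow> prod f A \<in> Zbq b"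
  by (induction A rule: infinite_finite_induct) (auto intro: Zbq_1 Zbq_mult)
lemma Zbq_prod_list: "b \<ge> 1 \<Longrightarrow> (\<And>p. p \<in> set ps \<Longrightarrow> p \<in> Zbq b) \<Longrightarrow> prod_list ps \<in> Zbq b"
  by (induction ps) (auto intro: Zbq_1 Zbq_mult)
lemma Zbq1_sub: "p \<in> Zbq 1 \<Longrightarrow> p \<in> Zbq b"
  by (auto simp: Zbq_iff intro: Zb1_sub)
lemma Zbq_X: "[:0,1:] \<in> Zbq b"
  by (intro Zbq_pCons Zbq_const Zb_0 Zb_1)
lemma Zbq_lin: "[:of_int a, 1:] \<in> Zbq b"
  by (intro Zbq_pCons Zbq_const Zb_int Zb_1)

lemma Zbq_div_monic:
  assumes b: "b \<ge> 1" and f: "f \<in> Zbq b" "lead_coeff f = 1"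
  shows "p \<in> Zbq b \<Longrightarrow> p = f * h \<Longrightarrow> h \<in> Zbq b"
proof (induction "degree h" arbitrary: h p rule: less_induct)
  case less
  show ?case
  proof (cases "h = 0")
    case True thus ?thesis by (simp add: Zbq_0)
  next
    case False
    have f0: "f \<noteq> 0" using f(2) by auto
    have dp: "degree p = degree f + degree h" using less.prems f0 False by (simp add: degree_mult_eq)
    have "lead_coeff p = lead_coeff h" using less.prems f(2) by (simp add: lead_coeff_mult)
    hence lc: "lead_coeff h \<in> Zb b" using less.prems(1) unfolding Zbq_iff by metis
    define m where "m = monom (lead_coeff h) (degree h)"
    define h' where "h' = h - m"
    have m: "m \<in> Zbq b" using lc by (simp add: m_def Zbq_monom)
    have eq: "p - f * m = f * h'" using less.prems by (simp add: h'_def algebra_simps)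
    have pm: "p - f * m \<in> Zbq b" using less.prems m f Zbq_mult Zbq_diff b by auto
    have "h' \<in> Zbq b"
    proof (cases "degree h = 0")
      case True
      then have "h' = 0" unfolding h'_def m_def
        by (metis True cancel_comm_monoid_add_class.diff_cancel degree_0_id monom_0)
      thus ?thesis by (simp add: Zbq_0)
    next
      case False
      have "\<forall>i>degree h - 1. coeff h' i = 0"
      proof (intro allI impI)
        fix i assume "i > degree h - 1"
        hence "i \<ge> degree h" using False by linarith
        thus "coeff h' i = 0" unfolding h'_def m_def
          by (cases "i = degree h") (auto simp: coeff_monom coeff_eq_0)
      qed
      hence "degree h' \<le> degree h - 1" by (intro degree_le) auto
      hence "degree h' < degree h" using False by linarith
      thus ?thesis using less.hyps[OF _ pm eq] by blast
    qed
    moreover have "h = h' + m" by (simp add: h'_def)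
    ultimately show ?thesis using m Zbq_add b by auto
  qed
qed

lemma dvdb_iff:
  assumes b: "b \<ge> 1" and f: "f \<in> Zbq b" "lead_coeff f = 1" and p: "p \<in> Zbq b"
  shows "dvdb b f p \<longleftrightarrow> f dvd p"
  using Zbq_div_monic[OF b f p] unfolding dvdb_def by (auto elim!: dvdE)

section \<open>Polynomial composition\<close>

lemma X_eq_monom: "[:0,1:] = monom (1::'a::comm_semiring_1) 1"
  by (simp add: monom_Suc)

lemma monom_1_eq_X_pow: "monom (1::'a::comm_semiring_1) n = [:0,1:]^n"
  by (simp add: X_eq_monom monom_power)

lemma pcompose_X_left: "pcompose [:0,1:] (q::'a::comm_semiring_1 poly) = q"
  by (simp add: pcompose_pCons smult_1_left)

lemma pcompose_power_left: "pcompose (p ^ n) q = pcompose p q ^ n"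
  by (induction n) (simp_all add: pcompose_1 pcompose_mult)

lemma pcompose_monom1: "pcompose (monom 1 n) q = q ^ n"
  by (simp add: monom_1_eq_X_pow pcompose_power_left pcompose_X_left)

lemma pcompose_monom: "pcompose (monom c n) q = smult c (q ^ n)"
proof -
  have "monom c n = smult c (monom 1 n)" by (simp add: smult_monom)
  thus ?thesis by (simp add: pcompose_smult pcompose_monom1)
qed

lemma pcompose_diff_dvd: "(a - a') dvd (pcompose p a - pcompose p (a'::'a::comm_ring_1 poly))"
proof (induction p)
  case 0 then show ?case by simp
next
  case (pCons c p)
  have "pcompose (pCons c p) a - pcompose (pCons c p) a' =
        a * (pcompose p a - pcompose p a') + (a - a') * pcompose p a'"
    by (simp add: pcompose_pCons algebra_simps)
  then show ?case using pCons.IH by (simp add: dvd_add)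
qed

lemma pow_sub_one_dvd: "(x - 1) dvd (x ^ k - (1::'a::comm_ring_1))"
proof -
  have "1 - x ^ k = (1 - x) * sum ((^) x) {..<k}" by (rule one_diff_power_eq)
  hence "x ^ k - 1 = (x - 1) * sum ((^) x) {..<k}" by (metis minus_diff_eq minus_mult_left)
  thus ?thesis by simp
qed


lemma S1:
  fixes b :: nat and r :: "rat poly"
  assumes b: "b \<ge> 1" and r: "r \<in> Zbq b"
  shows "\<exists>w\<in>Zbq b. monom 1 K dvd (r - pcompose w ([:1,1:]^b - 1))"
proof (induction K)
  case 0 then show ?case by (intro bexI[of _ 0]) (auto simp: Zbq_0)
next
  case (Suc K)
  define s where "s = ([:1,1:]^b - 1 :: rat poly)"
  obtain w where w: "w \<in> Zbq b" "monom 1 K dvd (r - pcompose w s)" using Suc s_def by auto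
  obtain h where h: "r - pcompose w s = monom 1 K * h" using w(2) by (auto elim: dvdE)
  define e where "e = (\<Sum>i<b. [:1,1:]^i :: rat poly)"
  have "1 - [:1,1:]^b = (1 - [:1,1:]) * e" unfolding e_def by (rule one_diff_power_eq)
  moreover have "[:1,1:] - 1 = ([:0,1:]::rat poly)" by (simp add: one_pCons)
  ultimately have se: "s = [:0,1:] * e" unfolding s_def
    by (metis minus_diff_eq minus_mult_left)
  have e0: "poly e 0 = of_nat b" by (simp add: e_def poly_sum)
  have sK: "s^K = monom 1 K * e^K" by (simp only: se power_mult_distrib monom_1_eq_X_pow)
  have "coeff (r - pcompose w s) K = coeff h 0" using h by (simp add: coeff_monom_mult)
  moreover have "r - pcompose w s \<in> Zbq b"
    using r w(1) b by (auto intro!: Zbq_diff Zbq_pcompose Zbq_power Zbq_1 Zbq_lin[of 1, simplified] simp: s_def)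
  ultimately have ch: "coeff h 0 \<in> Zb b" by (metis Zbq_iff)
  define c where "c = coeff h 0 / of_nat b ^ K"
  have c: "c \<in> Zb b" unfolding c_def using Zb_div[OF b ch] by simp
  define w' where "w' = w + monom c K"
  have w'Z: "w' \<in> Zbq b" unfolding w'_def using w(1) c b by (auto intro: Zbq_add Zbq_monom)
  have eqr: "r - pcompose w' s = monom 1 K * (h - smult c (e^K))"
    using h by (simp add: w'_def pcompose_add pcompose_monom sK algebra_simps)
  have p1: "poly (e^K) 0 = of_nat b ^ K" by (simp only: poly_power e0)
  have "poly (h - smult c (e^K)) 0 = poly h 0 - c * poly (e^K) 0" by simp
  also have "\<dots> = 0" using b unfolding p1 c_def by (simp add: poly_0_coeff_0)
  finally have "poly (h - smult c (e^K)) 0 = 0" .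
  then obtain g where "h - smult c (e^K) = [:0,1:] * g"
    using poly_eq_0_iff_dvd[of "h - smult c (e^K)" 0] by (auto elim: dvdE)
  with eqr have "r - pcompose w' s = monom 1 (Suc K) * g"
    by (simp add: monom_1_eq_X_pow mult.assoc)
  thus ?case using w'Z s_def by (intro bexI[of _ w']) (auto intro: dvdI)
qed

lemma S2:
  fixes b :: nat and R :: "rat poly"
  assumes b: "b \<ge> 1" and R: "R \<in> Zbq b"
  shows "\<exists>V\<in>Zbq b. [:-1,1:]^K dvd (R - pcompose V (monom 1 b))"
proof -
  define s where "s = ([:1,1:]^b - 1 :: rat poly)"
  define m1 where "m1 = ([:-1,1:] :: rat poly)"
  have rZ: "pcompose R [:1,1:] \<in> Zbq b" using R b by (auto intro: Zbq_pcompose Zbq_lin[of 1, simplified])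
  obtain w where w: "w \<in> Zbq b" "monom 1 K dvd (pcompose R [:1,1:] - pcompose w s)"
    using S1[OF b rZ] s_def by auto
  obtain h where h: "pcompose R [:1,1:] - pcompose w s = monom 1 K * h" using w(2) by (auto elim: dvdE)
  have c1: "pcompose [:1,1:] m1 = [:0,1:]" by (simp add: m1_def pcompose_pCons one_pCons)
  have c2: "pcompose [:-1,1:] q = q - 1" for q :: "rat poly"
  proof -
    have "[:-1:] = -(1::rat poly)" by (simp add: one_pCons)
    thus ?thesis by (simp add: pcompose_pCons pcompose_1)
  qed
  have "pcompose (pcompose R [:1,1:] - pcompose w s) m1 = pcompose (monom 1 K * h) m1"
    using h by simp
  hence "R - pcompose w (pcompose s m1) = m1^K * pcompose h m1"
    by (simp add: pcompose_diff pcompose_assoc[symmetric] c1 pcompose_mult pcompose_monom1)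
  moreover have "pcompose s m1 = monom 1 b - 1"
    by (simp add: s_def pcompose_diff pcompose_power_left c1 pcompose_1 monom_1_eq_X_pow)
  moreover have "pcompose (pcompose w m1) (monom 1 b) = pcompose w (monom 1 b - 1)"
    by (simp add: pcompose_assoc[symmetric] m1_def c2)
  ultimately have "R - pcompose (pcompose w m1) (monom 1 b) = m1^K * pcompose h m1" by simp
  moreover have "pcompose w m1 \<in> Zbq b" using w(1) b by (auto simp: m1_def intro!: Zbq_pcompose Zbq_lin[of "-1", simplified])
  ultimately show ?thesis by (intro bexI[of _ "pcompose w m1"]) (auto simp: m1_def)
qed

lemma pcompose_m1: "pcompose [:-1,1:] q = q - (1::rat poly)"
proof -
  have "[:-1:] = -(1::rat poly)" by (simp add: one_pCons)
  thus ?thesis by (simp add: pcompose_pCons pcompose_1)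
qed

lemma S3:
  fixes b :: nat and R :: "rat poly"
  assumes b: "b \<ge> 1" and R: "R \<in> Zbq b"
  shows "\<exists>V\<in>Zbq b. (monom 1 N - 1)^K dvd
           (pcompose R (monom 1 N) - pcompose (pcompose V (monom 1 N)) (monom 1 b))"
proof -
  obtain V h where V: "V \<in> Zbq b" "R - pcompose V (monom 1 b) = [:-1,1:]^K * h"
    using S2[OF b R, of K] by (auto elim: dvdE)
  have "pcompose (R - pcompose V (monom 1 b)) (monom 1 N) = pcompose ([:-1,1:]^K * h) (monom 1 N)"
    using V by simp
  hence "pcompose R (monom 1 N) - pcompose V (pcompose (monom 1 b) (monom 1 N))
         = (monom 1 N - 1)^K * pcompose h (monom 1 N)"
    by (simp add: pcompose_diff pcompose_mult pcompose_power_left pcompose_m1 pcompose_assoc)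
  moreover have "pcompose (monom 1 b) (monom 1 N) = pcompose (monom 1 N) (monom (1::rat) b)"
    by (simp add: pcompose_monom1 monom_power mult.commute)
  ultimately have "pcompose R (monom 1 N) - pcompose (pcompose V (monom 1 N)) (monom 1 b)
         = (monom 1 N - 1)^K * pcompose h (monom 1 N)"
    by (simp add: pcompose_assoc)
  thus ?thesis using V(1) by (intro bexI[of _ V]) (auto intro: dvdI)
qed

lemma exists_u:
  fixes b N K :: nat
  assumes b: "b \<ge> 1" and cop: "coprime b N"
  shows "\<exists>u\<in>Zbq b. (monom 1 N - 1)^K dvd (pcompose u (monom 1 b) - [:0,1:])"
proof -
  obtain c m where cm: "b * c = N * m + 1"
    using bezout_nat[of b N] b cop by (auto simp: coprime_iff_gcd_eq_1)
  define T where "T = (monom 1 N :: rat poly)"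
  define Q0 where "Q0 = (\<Sum>j<K. (1 - [:0,1:])^j :: rat poly)"
  define R where "R = Q0 ^ m"
  have RZ: "R \<in> Zbq b" unfolding R_def Q0_def using b
    by (intro Zbq_power Zbq_sum Zbq_diff Zbq_1 Zbq_X) auto
  define Q where "Q = (\<Sum>j<K. (1 - T)^j)"
  have RT: "pcompose R T = Q ^ m"
    by (simp add: R_def Q0_def Q_def pcompose_power_left pcompose_sum pcompose_diff pcompose_1 pcompose_X_left)
  obtain V where V: "V \<in> Zbq b" "(T - 1)^K dvd (Q^m - pcompose (pcompose V T) (monom 1 b))"
    using S3[OF b RZ, of N K] RT unfolding T_def by auto
  define W where "W = pcompose V T"
  define u where "u = monom 1 c * W"
  have uZ: "u \<in> Zbq b" unfolding u_def W_def T_def using V(1) b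
    by (intro Zbq_mult Zbq_monom Zbq_pcompose Zb_1) auto
  have "pcompose u (monom 1 b) = monom 1 (b*c) * pcompose W (monom 1 b)"
    by (simp add: u_def pcompose_mult pcompose_monom1 monom_power mult.commute)
  also have "monom 1 (b*c) = [:0,1:] * T^m"
    unfolding cm T_def monom_1_eq_X_pow by (simp add: power_mult)
  finally have phi: "pcompose u (monom 1 b) = [:0,1:] * T^m * pcompose W (monom 1 b)" .
  have "1 - (1 - T)^K = (1 - (1 - T)) * Q" unfolding Q_def by (rule one_diff_power_eq)
  hence TQ: "1 - T * Q = (1 - T)^K" by simp
  have "(T - 1) dvd (1 - T)" by (metis dvd_minus_iff dvd_refl minus_diff_eq)
  hence d1: "(T - 1)^K dvd (1 - T * Q)" unfolding TQ by (rule dvd_power_same)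
  have "1 - (T * Q)^m = (1 - T * Q) * (\<Sum>i<m. (T*Q)^i)" by (rule one_diff_power_eq)
  hence "(1 - T * Q) dvd (1 - (T * Q)^m)" by (auto intro: dvdI)
  with d1 have d2: "(T - 1)^K dvd (1 - (T * Q)^m)" by (rule dvd_trans)
  have key: "pcompose u (monom 1 b) - [:0,1:]
     = [:0,1:] * T^m * (pcompose W (monom 1 b) - Q^m) + [:0,1:] * (1 - (T*Q)^m) * (-1)"
    by (simp add: phi power_mult_distrib algebra_simps)
  have "(T - 1)^K dvd (pcompose W (monom 1 b) - Q^m)"
    using V(2) unfolding W_def by (metis dvd_minus_iff minus_diff_eq)
  hence "(T - 1)^K dvd pcompose u (monom 1 b) - [:0,1:]"
    unfolding key using d2 by (intro dvd_add dvd_mult dvd_mult2) auto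
  thus ?thesis using uZ unfolding T_def by blast
qed


definition CC :: "rat poly \<Rightarrow> complex poly" where "CC p = map_poly of_rat p"

lemma coeff_CC: "coeff (CC p) n = of_rat (coeff p n)" by (simp add: CC_def coeff_map_poly)
lemma CC_add: "CC (p + q) = CC p + CC q" by (rule poly_eqI) (simp add: coeff_CC of_rat_add)
lemma CC_diff: "CC (p - q) = CC p - CC q" by (rule poly_eqI) (simp add: coeff_CC of_rat_diff)
lemma CC_mult: "CC (p * q) = CC p * CC q"
  by (rule poly_eqI) (simp add: coeff_CC coeff_mult of_rat_sum of_rat_mult)
lemma CC_1: "CC 1 = 1" by (rule poly_eqI) (simp add: coeff_CC coeff_1)
lemma CC_0: "CC 0 = 0" by (rule poly_eqI) (simp add: coeff_CC)
lemma CC_eq_0_iff: "CC p = 0 \<longleftrightarrow> p = 0"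
  by (simp add: poly_eq_iff coeff_CC)
lemma CC_power: "CC (p ^ n) = CC p ^ n" by (induction n) (simp_all add: CC_1 CC_mult)
lemma CC_prod: "CC (prod f A) = (\<Prod>x\<in>A. CC (f x))"
  by (induction A rule: infinite_finite_induct) (simp_all add: CC_1 CC_mult)
lemma CC_pCons: "CC (pCons a p) = pCons (of_rat a) (CC p)"
  by (rule poly_eqI) (simp add: coeff_CC coeff_pCons split: nat.split)
lemma CC_pcompose: "CC (pcompose p q) = pcompose (CC p) (CC q)"
  by (induction p) (simp_all add: pcompose_pCons CC_add CC_mult CC_pCons CC_0)
lemma CC_monom: "CC (monom c n) = monom (of_rat c) n"
  by (rule poly_eqI) (simp add: coeff_CC coeff_monom)
lemma degree_CC: "degree (CC p) = degree p"
  unfolding CC_def by (rule degree_map_poly) simp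
lemma CC_dvd_mono: "p dvd q \<Longrightarrow> CC p dvd CC q"
  by (auto simp: CC_mult elim!: dvdE)

lemma CC_dvd:
  assumes d: "CC p dvd CC q" shows "p dvd q"
proof (cases "p = 0")
  case True then show ?thesis using d by (simp add: CC_0 CC_eq_0_iff)
next
  case False
  obtain k where k: "CC q = CC p * k" using d by (auto elim: dvdE)
  define r where "r = q mod p"
  have qr: "q = (q div p) * p + r" by (simp add: r_def)
  have Cr: "CC r = CC p * (k - CC (q div p))"
  proof -
    have "CC q = CC (q div p) * CC p + CC r" by (subst qr) (simp add: CC_add CC_mult)
    with k show ?thesis by (simp add: algebra_simps)
  qed
  show ?thesis
  proof (rule ccontr)
    assume nd: "\<not> p dvd q"
    hence r0: "r \<noteq> 0" by (simp add: r_def mod_eq_0_iff_dvd)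
    hence dr: "degree r < degree p" using False nd by (simp add: r_def degree_mod_less_degree)
    have "k - CC (q div p) \<noteq> 0" using r0 Cr by (auto simp: CC_eq_0_iff)
    moreover have "CC p \<noteq> 0" using False by (simp add: CC_eq_0_iff)
    ultimately have "degree (CC r) = degree (CC p) + degree (k - CC (q div p))"
      unfolding Cr by (rule degree_mult_eq[rotated])
    hence "degree r \<ge> degree p" by (simp add: degree_CC)
    with dr show False by simp
  qed
qed

lemma dvd_via_roots:
  assumes p: "p \<noteq> 0" and q: "q \<noteq> 0" and sub: "proots (CC p) \<subseteq># proots (CC q)"
  shows "p dvd q"
proof -
  have Cp: "CC p \<noteq> 0" "CC q \<noteq> 0" using p q by (auto simp: CC_eq_0_iff)
  have e1: "smult (lead_coeff (CC p)) (\<Prod>x\<in>#proots (CC p). [:-x, 1:]) = CC p"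
    by (rule complex_poly_decompose_multiset)
  have e2: "smult (lead_coeff (CC q)) (\<Prod>x\<in>#proots (CC q). [:-x, 1:]) = CC q"
    by (rule complex_poly_decompose_multiset)
  have "(\<Prod>x\<in>#proots (CC p). [:-x, 1:]) dvd (\<Prod>x\<in>#proots (CC q). [:-x, 1:])"
    by (intro prod_mset_subset_imp_dvd image_mset_subseteq_mono sub)
  hence "(\<Prod>x\<in>#proots (CC p). [:-x, 1:]) dvd CC q"
    by (subst e2[symmetric]) (rule dvd_smult)
  hence "CC p dvd CC q" using Cp
    by (subst e1[symmetric]) (simp add: smult_dvd_iff)
  thus ?thesis by (rule CC_dvd)
qed

section \<open>Primitive roots of unity\<close>

definition Prim :: "nat \<Rightarrow> complex set" where
  "Prim n = {z. n > 0 \<and> (\<forall>k. z ^ k = 1 \<longleftrightarrow> n dvd k)}"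

lemma Prim_pos: "z \<in> Prim n \<Longrightarrow> n > 0" by (simp add: Prim_def)
lemma Prim_pow: "z \<in> Prim n \<Longrightarrow> z ^ k = 1 \<longleftrightarrow> n dvd k" by (simp add: Prim_def)
lemma root_nz: "(z::complex) ^ n = 1 \<Longrightarrow> n > 0 \<Longrightarrow> z \<noteq> 0"
  by (cases n) auto

lemma Prim_nz: "z \<in> Prim n \<Longrightarrow> z \<noteq> 0"
  using root_nz[of z n] Prim_pow[of z n n] Prim_pos[of z n] by auto
lemma Prim_unique: "z \<in> Prim n \<Longrightarrow> z \<in> Prim m \<Longrightarrow> n = m"
  using Prim_pow[of z n n] Prim_pow[of z n m] Prim_pow[of z m m] Prim_pow[of z m n]
  by (auto intro: dvd_antisym)
lemma Prim_finite: "finite (Prim n)"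
proof (cases "n > 0")
  case True
  have "Prim n \<subseteq> {z. z ^ n = 1}" using Prim_pow by auto
  thus ?thesis using finite_roots_unity[of n] True by (auto intro: finite_subset)
next
  case False thus ?thesis by (simp add: Prim_def)
qed

lemma Prim_exists:
  fixes z :: complex
  assumes n: "n > 0" "z ^ n = 1"
  shows "\<exists>d. d dvd n \<and> z \<in> Prim d"
proof -
  define d where "d = (LEAST k. k > 0 \<and> z ^ k = 1)"
  have d: "d > 0" "z ^ d = 1" using LeastI[of "\<lambda>k. k > 0 \<and> z ^ k = 1" n] n by (auto simp: d_def)
  have iff: "z ^ k = 1 \<longleftrightarrow> d dvd k" for k
  proof
    assume zk: "z ^ k = 1"
    have "z ^ k = z ^ (d * (k div d)) * z ^ (k mod d)" by (simp add: power_add[symmetric])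
    moreover have "z ^ (d * (k div d)) = 1" by (simp add: power_mult d)
    ultimately have zm: "z ^ (k mod d) = 1" using zk by simp
    have "k mod d < d" using d by simp
    hence "\<not> (k mod d > 0 \<and> z ^ (k mod d) = 1)" using not_less_Least[of "k mod d"] d_def by blast
    with zm have "k mod d = 0" by simp
    thus "d dvd k" by (simp add: mod_eq_0_iff_dvd)
  next
    assume "d dvd k" then obtain j where "k = d * j" by (auto elim: dvdE)
    thus "z ^ k = 1" using d by (simp add: power_mult)
  qed
  have "z \<in> Prim d" using d iff by (simp add: Prim_def)
  moreover have "d dvd n" using iff n by simp
  ultimately show ?thesis by blast
qed

lemma Prim_power:
  assumes "z \<in> Prim n" "coprime n b" shows "z ^ b \<in> Prim n"
proof -
  have "(z ^ b) ^ k = 1 \<longleftrightarrow> n dvd k" for k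
    using Prim_pow[OF assms(1), of "b * k"] assms(2)
    by (simp add: power_mult coprime_dvd_mult_right_iff)
  thus ?thesis using Prim_pos[OF assms(1)] by (simp add: Prim_def)
qed

lemma Prim_root:
  assumes z: "z \<in> Prim n" and cop: "coprime n b" and b: "b \<ge> 1"
  shows "\<exists>w\<in>Prim n. w ^ b = z"
proof -
  obtain c m where cm: "b * c = n * m + 1"
    using bezout_nat[of b n] b cop by (auto simp: coprime_iff_gcd_eq_1 gcd.commute)
  define w where "w = z ^ c"
  have "w ^ b = z ^ (n * m) * z" unfolding w_def by (simp add: power_mult[symmetric] mult.commute cm)
  also have "z ^ (n * m) = 1" using Prim_pow[OF z] by simp
  finally have wb: "w ^ b = z" by simp
  have "w ^ k = 1 \<longleftrightarrow> n dvd k" for k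
  proof
    assume "w ^ k = 1"
    hence "n dvd c * k" using Prim_pow[OF z, of "c * k"] by (simp add: w_def power_mult)
    hence "n dvd b * (c * k)" by (rule dvd_mult)
    hence "n dvd b * c * k" by (simp add: mult.assoc)
    hence "n dvd n * m * k + k" by (simp add: cm algebra_simps)
    thus "n dvd k" by (simp add: dvd_add_right_iff mult.assoc)
  next
    assume "n dvd k" then obtain j where "k = n * j" by (auto elim: dvdE)
    thus "w ^ k = 1" using Prim_pow[OF z, of "n * c * j"] by (simp add: w_def power_mult[symmetric] mult_ac)
  qed
  hence "w \<in> Prim n" using Prim_pos[OF z] by (simp add: Prim_def)
  with wb show ?thesis by blast
qed

lemma order_one:
  fixes p :: "complex poly"
  assumes "poly p a = 0" "poly (pderiv p) a \<noteq> 0"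
  shows "order a p = 1"
proof -
  have "pderiv p \<noteq> 0" using assms(2) by auto
  hence p0: "p \<noteq> 0" by auto
  have "order a (pderiv p) = 0" using assms(2) by (rule order_0I)
  thus ?thesis using order_pderiv[OF p0 assms(1)] by simp
qed

lemma order_power:
  fixes p :: "complex poly"
  assumes "p \<noteq> 0" shows "order a (p ^ k) = k * order a p"
proof (induction k)
  case 0 then show ?case by simp
next
  case (Suc k)
  have "p * p ^ k \<noteq> 0" using assms by simp
  thus ?case using Suc by (simp add: order_mult)
qed

lemma order_pcompose_monom:
  fixes p :: "complex poly"
  assumes p: "p \<noteq> 0" and a: "a \<noteq> 0" and b: "b \<ge> 1"
  shows "pcompose p (monom 1 b) \<noteq> 0 \<and> order a (pcompose p (monom 1 b)) = order (a ^ b) p"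
proof -
  define e where "e = a ^ b"
  define k where "k = order e p"
  obtain r where r: "p = [:-e,1:]^k * r" "\<not> [:-e,1:] dvd r"
    using order_decomp[OF p, of e] k_def by auto
  have r0: "poly r e \<noteq> 0" using r(2) poly_eq_0_iff_dvd by blast
  define L where "L = monom 1 b - [:e:]"
  have L: "pcompose [:-e,1:] (monom 1 b) = L"
  proof -
    have "[:-e:] = - [:e:]" by simp
    thus ?thesis by (simp add: L_def pcompose_pCons)
  qed
  have pL: "poly L a = 0" by (simp add: L_def e_def poly_monom)
  have "pderiv L = monom (of_nat b) (b - 1)" by (simp add: L_def pderiv_diff pderiv_monom pderiv_pCons)
  hence dL: "poly (pderiv L) a \<noteq> 0" using a b by (simp add: poly_monom)
  have oL: "order a L = 1" by (rule order_one[OF pL dL])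
  have L0: "L \<noteq> 0" using dL by auto
  have rc0: "poly (pcompose r (monom 1 b)) a \<noteq> 0" using r0 by (simp add: poly_pcompose poly_monom e_def)
  hence rc: "pcompose r (monom 1 b) \<noteq> 0" by auto
  have eq: "pcompose p (monom 1 b) = L^k * pcompose r (monom 1 b)"
    by (subst r(1)) (simp add: pcompose_mult pcompose_power_left L)
  have nz: "L^k * pcompose r (monom 1 b) \<noteq> 0" using L0 rc by simp
  have "order a (L^k * pcompose r (monom 1 b)) = order a (L^k) + order a (pcompose r (monom 1 b))"
    by (rule order_mult[OF nz])
  also have "\<dots> = k" using order_power[OF L0] oL order_0I[OF rc0] by simp
  finally show ?thesis using eq nz k_def e_def by simp
qed

lemma proots_Xn:
  assumes n: "n > 0"
  shows "proots (monom 1 n - 1 :: complex poly) = mset_set {z. z ^ n = 1}"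
proof (rule multiset_eqI)
  fix z :: complex
  have nz: "monom 1 n - 1 \<noteq> (0::complex poly)"
  proof
    assume "monom 1 n - 1 = (0::complex poly)"
    hence "poly (monom 1 n - 1) 0 = (0::complex)" by simp
    thus False using n by (cases n) (simp_all add: poly_monom)
  qed
  have fin: "finite {z::complex. z ^ n = 1}" using n by (intro finite_roots_unity) simp
  show "count (proots (monom 1 n - 1)) z = count (mset_set {z. z ^ n = 1}) z"
  proof (cases "z ^ n = 1")
    case True
    hence z0: "z \<noteq> 0" using n by (rule root_nz)
    have "order z (monom 1 n - 1) = 1"
    proof (rule order_one)
      show "poly (monom 1 n - 1) z = 0" using True by (simp add: poly_monom)
      have "pderiv (monom 1 n - 1 :: complex poly) = monom (of_nat n) (n - 1)"
        by (simp add: pderiv_diff pderiv_monom)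
      thus "poly (pderiv (monom 1 n - 1)) z \<noteq> 0" using z0 n by (simp add: poly_monom)
    qed
    thus ?thesis using True nz fin by simp
  next
    case False
    have "order z (monom 1 n - 1) = 0" by (rule order_0I) (use False in \<open>simp add: poly_monom\<close>)
    thus ?thesis using False nz fin by simp
  qed
qed

section \<open>Cyclotomic polynomials\<close>

lemma count_Prim: "count (mset_set (Prim d)) z = (if z \<in> Prim d then 1 else 0)"
  using Prim_finite[of d] by (simp add: count_mset_set)

lemma Xn_props:
  assumes n: "n > 0"
  shows "(monom 1 n - 1 :: rat poly) \<in> Zbq 1" "lead_coeff (monom 1 n - 1 :: rat poly) = 1"
        "(monom 1 n - 1 :: rat poly) \<noteq> 0"
proof -
  show "(monom 1 n - 1 :: rat poly) \<in> Zbq 1"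
    by (intro Zbq_diff Zbq_monom Zbq_1 Zb_1) auto
  have "degree (monom 1 n + (-1) :: rat poly) = n"
    using n by (subst degree_add_eq_left) (simp_all add: degree_monom_eq)
  hence "degree (monom 1 n - 1 :: rat poly) = n" by simp
  thus L: "lead_coeff (monom 1 n - 1 :: rat poly) = 1" using n by simp
  show "(monom 1 n - 1 :: rat poly) \<noteq> 0" by (metis L coeff_0 zero_neq_one)
qed

lemma cyclo_props:
  "n > 0 \<Longrightarrow> cyclo n \<in> Zbq 1 \<and> lead_coeff (cyclo n) = 1 \<and> proots (CC (cyclo n)) = mset_set (Prim n)
           \<and> cyclo n * (\<Prod>d\<in>{d. d dvd n \<and> d < n}. cyclo d) = monom 1 n - 1"
proof (induction n rule: less_induct)
  case (less n)
  define D where "D = {d. d dvd n \<and> d < n}"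
  have Dfin: "finite D" unfolding D_def by (rule finite_subset[of _ "{..<n}"]) auto
  have Dpos: "d \<in> D \<Longrightarrow> 0 < d" for d using less.prems by (auto simp: D_def intro: Nat.gr0I)
  have IH: "cyclo d \<in> Zbq 1 \<and> lead_coeff (cyclo d) = 1 \<and> proots (CC (cyclo d)) = mset_set (Prim d)"
    if "d \<in> D" for d using less.IH[of d] Dpos[OF that] that by (auto simp: D_def)
  define P where "P = (\<Prod>d\<in>D. cyclo d)"
  have PZ: "P \<in> Zbq 1" unfolding P_def using IH by (intro Zbq_prod) auto
  have Plc: "lead_coeff P = 1" unfolding P_def using IH by (simp add: lead_coeff_prod)
  hence P0: "P \<noteq> 0" by auto
  have cyc0: "CC (cyclo d) \<noteq> 0" if "d \<in> D" for d
    using IH[OF that] by (auto simp: CC_eq_0_iff)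
  have rootsP: "proots (CC P) = (\<Sum>d\<in>D. mset_set (Prim d))"
    unfolding P_def CC_prod using cyc0 IH by (simp add: proots_prod)
  have cntP: "count (proots (CC P)) z = (if \<exists>d\<in>D. z \<in> Prim d then 1 else 0)" for z
  proof -
    have "count (proots (CC P)) z = (\<Sum>d\<in>D. if z \<in> Prim d then 1 else 0)"
      by (simp add: rootsP count_sum count_Prim)
    also have "\<dots> = (if \<exists>d\<in>D. z \<in> Prim d then 1 else 0)"
    proof (cases "\<exists>d\<in>D. z \<in> Prim d")
      case True
      then obtain d0 where d0: "d0 \<in> D" "z \<in> Prim d0" by blast
      have "(\<Sum>d\<in>D. if z \<in> Prim d then 1 else 0) = (\<Sum>d\<in>D. if d = d0 then 1 else (0::nat))"
        using d0 Prim_unique by (intro sum.cong) auto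
      also have "\<dots> = 1" using d0 Dfin by simp
      finally show ?thesis using True by simp
    qed simp
    finally show ?thesis .
  qed
  define Xn where "Xn = (monom 1 n - 1 :: rat poly)"
  have XnZ: "Xn \<in> Zbq 1" "lead_coeff Xn = 1" "Xn \<noteq> 0" using Xn_props[OF less.prems] by (auto simp: Xn_def)
  have CXn: "CC Xn = monom 1 n - 1" by (simp add: Xn_def CC_diff CC_monom CC_1)
  have fin: "finite {z::complex. z ^ n = 1}" using less.prems by (intro finite_roots_unity) simp
  have cntX: "count (proots (CC Xn)) z = (if z ^ n = 1 then 1 else 0)" for z
    using proots_Xn[OF less.prems] fin by (simp add: CXn)
  have sub: "proots (CC P) \<subseteq># proots (CC Xn)"
  proof (rule mset_subset_eqI)
    fix z
    show "count (proots (CC P)) z \<le> count (proots (CC Xn)) z"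
    proof (cases "\<exists>d\<in>D. z \<in> Prim d")
      case True
      then obtain d where "d \<in> D" "z \<in> Prim d" by blast
      hence "z ^ n = 1" using Prim_pow[of z d n] by (simp add: D_def)
      thus ?thesis by (simp add: cntP cntX)
    qed (simp add: cntP)
  qed
  have "P dvd Xn" by (rule dvd_via_roots[OF P0 XnZ(3) sub])
  moreover have "cyclo n = Xn div P"
    using less.prems by (subst cyclo.simps) (simp add: Xn_def P_def D_def)
  ultimately have eq: "cyclo n * P = Xn" by simp
  have cZ: "cyclo n \<in> Zbq 1"
    by (rule Zbq_div_monic[of 1 P Xn]) (use PZ Plc XnZ eq in \<open>auto simp: mult.commute\<close>)
  have clc: "lead_coeff (cyclo n) = 1"
    using arg_cong[OF eq, of lead_coeff] Plc XnZ by (simp add: lead_coeff_mult)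
  have c0: "CC (cyclo n) \<noteq> 0" using clc by (auto simp: CC_eq_0_iff)
  have CP0: "CC P \<noteq> 0" using P0 by (simp add: CC_eq_0_iff)
  have "proots (CC Xn) = proots (CC (cyclo n)) + proots (CC P)"
    using eq c0 CP0 by (metis CC_mult proots_mult)
  hence cnt: "count (proots (CC Xn)) z = count (proots (CC (cyclo n))) z + count (proots (CC P)) z" for z
    by simp
  have "proots (CC (cyclo n)) = mset_set (Prim n)"
  proof (rule multiset_eqI)
    fix z
    have cn: "count (mset_set (Prim n)) z = (if z \<in> Prim n then 1 else 0)" by (rule count_Prim)
    show "count (proots (CC (cyclo n))) z = count (mset_set (Prim n)) z"
    proof (cases "z \<in> Prim n")
      case True
      hence "z ^ n = 1" using Prim_pow by auto
      moreover have "\<not> (\<exists>d\<in>D. z \<in> Prim d)" using True Prim_unique by (auto simp: D_def)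
      ultimately show ?thesis using cnt[of z] True by (simp add: cntX cntP cn)
    next
      case False
      show ?thesis
      proof (cases "z ^ n = 1")
        case True
        then obtain d where d: "d dvd n" "z \<in> Prim d" using Prim_exists less.prems by blast
        have "d \<noteq> n" using d False by auto
        hence "d \<in> D" using d less.prems by (auto simp: D_def dest: dvd_imp_le)
        hence ex: "\<exists>d\<in>D. z \<in> Prim d" using d by blast
        thus ?thesis using cnt[of z] True False by (simp add: cntX cntP cn)
      next
        case F2: False
        thus ?thesis using cnt[of z] False by (simp add: cntX cn)
      qed
    qed
  qed
  thus ?case using cZ clc eq by (simp add: P_def D_def Xn_def)
qed

definition cnt :: "nat list \<Rightarrow> complex \<Rightarrow> nat" where
  "cnt ns a = length (filter (\<lambda>n. a \<in> Prim n) ns)"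

lemma prodcyc_props:
  assumes "set ns \<subseteq> {n. n > 0}"
  shows "prod_list (map cyclo ns) \<in> Zbq 1 \<and> lead_coeff (prod_list (map cyclo ns)) = 1
     \<and> (\<forall>a. order a (CC (prod_list (map cyclo ns))) = cnt ns a)"
  using assms
proof (induction ns)
  case Nil then show ?case by (simp add: Zbq_1 CC_1 cnt_def)
next
  case (Cons n ns)
  have n: "n > 0" using Cons.prems by auto
  have IH: "prod_list (map cyclo ns) \<in> Zbq 1" "lead_coeff (prod_list (map cyclo ns)) = 1"
     "\<And>a. order a (CC (prod_list (map cyclo ns))) = cnt ns a" using Cons by auto
  have c: "cyclo n \<in> Zbq 1" "lead_coeff (cyclo n) = 1" "proots (CC (cyclo n)) = mset_set (Prim n)"
    using cyclo_props[OF n] by auto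
  have c0: "CC (cyclo n) \<noteq> 0" using c(2) by (auto simp: CC_eq_0_iff)
  have r0: "CC (prod_list (map cyclo ns)) \<noteq> 0" using IH(2) by (auto simp: CC_eq_0_iff)
  have oc: "order a (CC (cyclo n)) = (if a \<in> Prim n then 1 else 0)" for a
    using count_proots[OF c0, of a] c(3) by (simp add: count_Prim)
  have "order a (CC (cyclo n) * CC (prod_list (map cyclo ns))) = cnt (n # ns) a" for a
    using c0 r0 by (simp add: order_mult oc IH(3) cnt_def)
  thus ?case using c IH by (simp add: CC_mult lead_coeff_mult Zbq_mult)
qed

lemma filter_length_mono:
  "(\<And>x. x \<in> set xs \<Longrightarrow> P x \<Longrightarrow> Q x) \<Longrightarrow> length (filter P xs) \<le> length (filter Q xs)"
  by (induction xs) auto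

lemma Nb_pos: "set ns \<subseteq> Nb b \<Longrightarrow> set ns \<subseteq> {n. n > 0}"
  by (auto simp: Nb_def)

lemma PhiStar_props:
  assumes "f \<in> PhiStar (Nb b)"
  shows "f \<in> Zbq b" "lead_coeff f = 1" "f \<noteq> 0"
proof -
  obtain ns where ns: "set ns \<subseteq> Nb b" "f = prod_list (map cyclo ns)"
    using assms unfolding PhiStar_def by auto
  show "f \<in> Zbq b" "lead_coeff f = 1" using prodcyc_props[OF Nb_pos[OF ns(1)]] ns(2) Zbq1_sub by auto
  thus "f \<noteq> 0" by (metis coeff_0 zero_neq_one)
qed

lemma cnt_nz:
  assumes "cnt ns a \<noteq> 0" obtains n where "n \<in> set ns" "a \<in> Prim n"
proof -
  have "filter (\<lambda>n. a \<in> Prim n) ns \<noteq> []" using assms by (auto simp: cnt_def)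
  thus ?thesis using that by (auto simp: filter_empty_conv)
qed

lemma frob_dvd:
  assumes b: "b \<ge> 1" and f: "f \<in> PhiStar (Nb b)"
  shows "f dvd pcompose f (monom 1 b)"
proof -
  obtain ns where ns: "set ns \<subseteq> Nb b" "f = prod_list (map cyclo ns)"
    using f unfolding PhiStar_def by auto
  have P: "\<And>a. order a (CC f) = cnt ns a" using prodcyc_props[OF Nb_pos[OF ns(1)]] ns(2) by auto
  have f0: "f \<noteq> 0" using PhiStar_props[OF f] by auto
  have Cf0: "CC f \<noteq> 0" using f0 by (simp add: CC_eq_0_iff)
  have Cphi: "CC (pcompose f (monom 1 b)) = pcompose (CC f) (monom 1 b)"
    by (simp add: CC_pcompose CC_monom)
  have nz: "pcompose (CC f) (monom 1 b) \<noteq> 0" using order_pcompose_monom[OF Cf0, of 1] b by simp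
  hence phi0: "pcompose f (monom 1 b) \<noteq> 0" using Cphi by (auto simp: CC_0)
  show ?thesis
  proof (rule dvd_via_roots[OF f0 phi0], rule mset_subset_eqI)
    fix a
    show "count (proots (CC f)) a \<le> count (proots (CC (pcompose f (monom 1 b)))) a"
    proof (cases "cnt ns a = 0")
      case True then show ?thesis using Cf0 P by simp
    next
      case False
      then obtain n where n: "n \<in> set ns" "a \<in> Prim n" by (rule cnt_nz)
      have a0: "a \<noteq> 0" using Prim_nz n(2) .
      have "order a (pcompose (CC f) (monom 1 b)) = order (a^b) (CC f)"
        using order_pcompose_monom[OF Cf0 a0 b] by simp
      moreover have "cnt ns a \<le> cnt ns (a^b)" unfolding cnt_def
        by (rule filter_length_mono) (use Prim_power ns(1) in \<open>auto simp: Nb_def\<close>)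
      ultimately show ?thesis using Cf0 nz P Cphi by simp
    qed
  qed
qed

lemma frob_inj:
  assumes b: "b \<ge> 1" and f: "f \<in> PhiStar (Nb b)" and d: "f dvd pcompose z (monom 1 b)"
  shows "f dvd z"
proof (cases "z = 0")
  case True then show ?thesis by simp
next
  case False
  obtain ns where ns: "set ns \<subseteq> Nb b" "f = prod_list (map cyclo ns)"
    using f unfolding PhiStar_def by auto
  have P: "\<And>a. order a (CC f) = cnt ns a" using prodcyc_props[OF Nb_pos[OF ns(1)]] ns(2) by auto
  have f0: "f \<noteq> 0" using PhiStar_props[OF f] by auto
  have Cf0: "CC f \<noteq> 0" using f0 by (simp add: CC_eq_0_iff)
  have Cz0: "CC z \<noteq> 0" using False by (simp add: CC_eq_0_iff)
  have dC: "CC f dvd pcompose (CC z) (monom 1 b)"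
    using CC_dvd_mono[OF d] by (simp add: CC_pcompose CC_monom)
  have nz: "pcompose (CC z) (monom 1 b) \<noteq> 0" using order_pcompose_monom[OF Cz0, of 1] b by simp
  show ?thesis
  proof (rule dvd_via_roots[OF f0 False], rule mset_subset_eqI)
    fix a
    show "count (proots (CC f)) a \<le> count (proots (CC z)) a"
    proof (cases "cnt ns a = 0")
      case True then show ?thesis using Cf0 P by simp
    next
      case False
      then obtain n where n: "n \<in> set ns" "a \<in> Prim n" by (rule cnt_nz)
      have cop: "coprime n b" using ns(1) n(1) by (auto simp: Nb_def)
      obtain w where w: "w \<in> Prim n" "w ^ b = a" using Prim_root[OF n(2) cop b] by blast
      have cw: "cnt ns w = cnt ns a" unfolding cnt_def
        by (intro arg_cong[where f=length] filter_cong refl) (use w n Prim_unique in metis)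
      have w0: "w \<noteq> 0" using Prim_nz w(1) .
      have "order w (CC f) \<le> order w (pcompose (CC z) (monom 1 b))" by (rule dvd_imp_order_le[OF nz dC])
      also have "\<dots> = order a (CC z)" using order_pcompose_monom[OF Cz0 w0 b] w(2) by simp
      finally show ?thesis using P Cf0 Cz0 cw by simp
    qed
  qed
qed

lemma cyclo_dvd_Xn: "n > 0 \<Longrightarrow> cyclo n dvd monom 1 n - 1"
  using cyclo_props[of n] by (metis dvd_triv_left)

lemma Xn_dvd: "n dvd N \<Longrightarrow> (monom 1 n - 1 :: rat poly) dvd monom 1 N - 1"
proof -
  assume "n dvd N" then obtain k where k: "N = n * k" by (auto elim: dvdE)
  have "monom (1::rat) N = monom 1 n ^ k" by (simp add: monom_power k)
  thus ?thesis using pow_sub_one_dvd[of "monom (1::rat) n" k] by simp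
qed

lemma prodcyc_dvd_G:
  "set ns \<subseteq> {n. n > 0} \<Longrightarrow> (\<forall>n\<in>set ns. n dvd N) \<Longrightarrow>
   prod_list (map cyclo ns) dvd (monom 1 N - 1)^(length ns)"
proof (induction ns)
  case Nil then show ?case by simp
next
  case (Cons n ns)
  have "cyclo n dvd monom 1 N - 1"
    using cyclo_dvd_Xn[of n] Xn_dvd[of n N] Cons.prems by (auto intro: dvd_trans)
  thus ?case using Cons by (auto intro: mult_dvd_mono)
qed

lemma frob_surj_level:
  assumes b: "b \<ge> 1" and f: "f \<in> PhiStar (Nb b)"
  shows "\<exists>u\<in>Zbq b. f dvd (pcompose u (monom 1 b) - [:0,1:])"
proof -
  obtain ns where ns: "set ns \<subseteq> Nb b" "f = prod_list (map cyclo ns)"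
    using f unfolding PhiStar_def by auto
  define N where "N = prod_list ns"
  have cop: "coprime b N" unfolding N_def
    by (rule prod_list_coprime_right) (use ns(1) in \<open>auto simp: Nb_def coprime_commute\<close>)
  have fG: "f dvd (monom 1 N - 1)^(length ns)"
    unfolding ns(2) N_def by (rule prodcyc_dvd_G[OF Nb_pos[OF ns(1)]]) (auto simp: prod_list_dvd)
  obtain u where "u \<in> Zbq b" "(monom 1 N - 1)^(length ns) dvd (pcompose u (monom 1 b) - [:0,1:])"
    using exists_u[OF b cop] by blast
  thus ?thesis using fG by (auto intro: dvd_trans)
qed

lemma frob_Zbq: "b \<ge> 1 \<Longrightarrow> p \<in> Zbq b \<Longrightarrow> frob_poly b p \<in> Zbq b"
  unfolding frob_poly_def by (intro Zbq_pcompose Zbq_monom Zb_1)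

lemma dvdb_frob:
  assumes b: "b \<ge> 1" and f: "f \<in> PhiStar (Nb b)" and d: "dvdb b f p"
  shows "dvdb b f (frob_poly b p)"
proof -
  obtain h where h: "h \<in> Zbq b" "p = f * h" using d unfolding dvdb_def by auto
  have fZ: "f \<in> Zbq b" "lead_coeff f = 1" using PhiStar_props[OF f] by auto
  obtain k where k: "frob_poly b f = f * k" using frob_dvd[OF b f] unfolding frob_poly_def by (auto elim: dvdE)
  have kZ: "k \<in> Zbq b" by (rule Zbq_div_monic[OF b fZ frob_Zbq[OF b fZ(1)] k])
  have "frob_poly b p = f * (k * frob_poly b h)"
    using k h(2) by (simp add: frob_poly_def pcompose_mult mult.assoc)
  moreover have "k * frob_poly b h \<in> Zbq b" by (rule Zbq_mult[OF b kZ frob_Zbq[OF b h(1)]])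
  ultimately show ?thesis unfolding dvdb_def by blast
qed

lemma limeq_refl: "limeq b S x x"
  unfolding limeq_def dvdb_def using Zbq_0 by (auto intro!: bexI[of _ 0])

lemma frob_diff: "frob_poly b (p - q) = frob_poly b p - frob_poly b q"
  by (simp add: frob_poly_def pcompose_diff)

lemma dvdb_dvd: "dvdb b f p \<Longrightarrow> f dvd p" unfolding dvdb_def by auto

theorem theorem13:
  fixes b :: nat
  assumes "b \<ge> 1"
  shows
    \<comment> \<open>well-defined on each finite level Z[1/b][q]/(f), f in Phi*_{N_b}\<close>
    "(\<forall>f\<in>PhiStar (Nb b). \<forall>p\<in>Zbq b. dvdb b f p \<longrightarrow> dvdb b f (frob_poly b p))
     \<and> (\<forall>x\<in>invlim b (Nb b). Frob b x \<in> invlim b (Nb b))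
     \<and> (\<forall>x y. limeq b (Nb b) x y \<longrightarrow> limeq b (Nb b) (Frob b x) (Frob b y))
     \<comment> \<open>Z[1/b]-algebra homomorphism\<close>
     \<and> (\<forall>x\<in>invlim b (Nb b). \<forall>y\<in>invlim b (Nb b).
          limeq b (Nb b) (Frob b (\<lambda>f. x f + y f)) (\<lambda>f. Frob b x f + Frob b y f)
        \<and> limeq b (Nb b) (Frob b (\<lambda>f. x f * y f)) (\<lambda>f. Frob b x f * Frob b y f))
     \<and> limeq b (Nb b) (Frob b (\<lambda>f. 1)) (\<lambda>f. 1)
     \<and> (\<forall>c\<in>Zb b. \<forall>x\<in>invlim b (Nb b).
          limeq b (Nb b) (Frob b (\<lambda>f. smult c (x f))) (\<lambda>f. smult c (Frob b x f)))
     \<comment> \<open>bijective\<close>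
     \<and> (\<forall>x\<in>invlim b (Nb b). \<forall>y\<in>invlim b (Nb b).
          limeq b (Nb b) (Frob b x) (Frob b y) \<longrightarrow> limeq b (Nb b) x y)
     \<and> (\<forall>y\<in>invlim b (Nb b). \<exists>x\<in>invlim b (Nb b). limeq b (Nb b) (Frob b x) y)"
proof -
  have b: "b \<ge> 1" by (rule assms)
  have fZ: "\<And>f. f \<in> PhiStar (Nb b) \<Longrightarrow> f \<in> Zbq b \<and> lead_coeff f = 1"
    using PhiStar_props by auto
  have c1: "\<forall>f\<in>PhiStar (Nb b). \<forall>p\<in>Zbq b. dvdb b f p \<longrightarrow> dvdb b f (frob_poly b p)"
    using dvdb_frob[OF b] by blast
  have c2: "\<forall>x\<in>invlim b (Nb b). Frob b x \<in> invlim b (Nb b)"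
  proof
    fix x assume x: "x \<in> invlim b (Nb b)"
    show "Frob b x \<in> invlim b (Nb b)"
      unfolding invlim_def
    proof (intro CollectI conjI ballI impI)
      fix f assume "f \<in> PhiStar (Nb b)"
      thus "Frob b x f \<in> Zbq b" using x frob_Zbq[OF b] by (auto simp: invlim_def Frob_def)
    next
      fix f g assume f: "f \<in> PhiStar (Nb b)" and g: "g \<in> PhiStar (Nb b)" and fg: "dvdb b f g"
      have "dvdb b f (x g - x f)" using x f g fg by (auto simp: invlim_def)
      hence "dvdb b f (frob_poly b (x g - x f))" by (rule dvdb_frob[OF b f])
      thus "dvdb b f (Frob b x g - Frob b x f)" by (simp add: Frob_def frob_diff)
    qed
  qed
  have c3: "\<forall>x y. limeq b (Nb b) x y \<longrightarrow> limeq b (Nb b) (Frob b x) (Frob b y)"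
  proof (intro allI impI)
    fix x y assume xy: "limeq b (Nb b) x y"
    show "limeq b (Nb b) (Frob b x) (Frob b y)" unfolding limeq_def
    proof
      fix f assume f: "f \<in> PhiStar (Nb b)"
      have "dvdb b f (x f - y f)" using xy f by (auto simp: limeq_def)
      hence "dvdb b f (frob_poly b (x f - y f))" by (rule dvdb_frob[OF b f])
      thus "dvdb b f (Frob b x f - Frob b y f)" by (simp add: Frob_def frob_diff)
    qed
  qed
  have c4: "\<forall>x\<in>invlim b (Nb b). \<forall>y\<in>invlim b (Nb b).
          limeq b (Nb b) (Frob b (\<lambda>f. x f + y f)) (\<lambda>f. Frob b x f + Frob b y f)
        \<and> limeq b (Nb b) (Frob b (\<lambda>f. x f * y f)) (\<lambda>f. Frob b x f * Frob b y f)"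
  proof (intro ballI conjI)
    fix x y :: "rat poly \<Rightarrow> rat poly"
    have "Frob b (\<lambda>f. x f + y f) = (\<lambda>f. Frob b x f + Frob b y f)"
      by (simp add: Frob_def frob_poly_def pcompose_add)
    thus "limeq b (Nb b) (Frob b (\<lambda>f. x f + y f)) (\<lambda>f. Frob b x f + Frob b y f)"
      by (simp add: limeq_refl)
    have "Frob b (\<lambda>f. x f * y f) = (\<lambda>f. Frob b x f * Frob b y f)"
      by (simp add: Frob_def frob_poly_def pcompose_mult)
    thus "limeq b (Nb b) (Frob b (\<lambda>f. x f * y f)) (\<lambda>f. Frob b x f * Frob b y f)"
      by (simp add: limeq_refl)
  qed
  have c5: "limeq b (Nb b) (Frob b (\<lambda>f. 1)) (\<lambda>f. 1)"
  proof -
    have "Frob b (\<lambda>f. 1) = (\<lambda>f. 1)" by (simp add: Frob_def frob_poly_def pcompose_1)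
    thus ?thesis by (simp add: limeq_refl)
  qed
  have c6: "\<forall>c\<in>Zb b. \<forall>x\<in>invlim b (Nb b).
          limeq b (Nb b) (Frob b (\<lambda>f. smult c (x f))) (\<lambda>f. smult c (Frob b x f))"
  proof (intro ballI)
    fix c x
    have "Frob b (\<lambda>f. smult c (x f)) = (\<lambda>f. smult c (Frob b x f))"
      by (simp add: Frob_def frob_poly_def pcompose_smult)
    thus "limeq b (Nb b) (Frob b (\<lambda>f. smult c (x f))) (\<lambda>f. smult c (Frob b x f))"
      by (simp add: limeq_refl)
  qed
  have c7: "\<forall>x\<in>invlim b (Nb b). \<forall>y\<in>invlim b (Nb b).
          limeq b (Nb b) (Frob b x) (Frob b y) \<longrightarrow> limeq b (Nb b) x y"
  proof (intro ballI impI)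
    fix x y assume x: "x \<in> invlim b (Nb b)" and y: "y \<in> invlim b (Nb b)"
      and e: "limeq b (Nb b) (Frob b x) (Frob b y)"
    show "limeq b (Nb b) x y" unfolding limeq_def
    proof
      fix f assume f: "f \<in> PhiStar (Nb b)"
      have xyZ: "x f - y f \<in> Zbq b" using x y f b by (auto simp: invlim_def intro: Zbq_diff)
      have "dvdb b f (Frob b x f - Frob b y f)" using e f by (auto simp: limeq_def)
      hence "f dvd pcompose (x f - y f) (monom 1 b)"
        by (simp add: Frob_def frob_poly_def pcompose_diff dvdb_dvd)
      hence "f dvd x f - y f" by (rule frob_inj[OF b f])
      thus "dvdb b f (x f - y f)" using dvdb_iff[OF b _ _ xyZ] fZ[OF f] by auto
    qed
  qed
  have c8: "\<forall>y\<in>invlim b (Nb b). \<exists>x\<in>invlim b (Nb b). limeq b (Nb b) (Frob b x) y"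
  proof
    fix y assume y: "y \<in> invlim b (Nb b)"
    define U where "U = (\<lambda>f. SOME u. u \<in> Zbq b \<and> f dvd (pcompose u (monom 1 b) - [:0,1:]))"
    have U: "U f \<in> Zbq b \<and> f dvd (pcompose (U f) (monom 1 b) - [:0,1:])" if "f \<in> PhiStar (Nb b)" for f
      unfolding U_def by (rule someI_ex) (use frob_surj_level[OF b that] in blast)
    define x where "x = (\<lambda>f. pcompose (y f) (U f))"
    have yZ: "y f \<in> Zbq b" if "f \<in> PhiStar (Nb b)" for f using y that by (auto simp: invlim_def)
    have xZ: "x f \<in> Zbq b" if "f \<in> PhiStar (Nb b)" for f
      using U[OF that] yZ[OF that] b by (auto simp: x_def intro: Zbq_pcompose)
    have K1: "f dvd frob_poly b (x f) - y f" if f: "f \<in> PhiStar (Nb b)" for f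
    proof -
      have "frob_poly b (x f) = pcompose (y f) (pcompose (U f) (monom 1 b))"
        by (simp add: x_def frob_poly_def pcompose_assoc)
      moreover have "(pcompose (U f) (monom 1 b) - [:0,1:]) dvd
          (pcompose (y f) (pcompose (U f) (monom 1 b)) - pcompose (y f) [:0,1:])"
        by (rule pcompose_diff_dvd)
      ultimately have "(pcompose (U f) (monom 1 b) - [:0,1:]) dvd frob_poly b (x f) - y f" by simp
      thus ?thesis using U[OF f] by (auto intro: dvd_trans)
    qed
    have "x \<in> invlim b (Nb b)" unfolding invlim_def
    proof (intro CollectI conjI ballI impI)
      fix f assume "f \<in> PhiStar (Nb b)" thus "x f \<in> Zbq b" by (rule xZ)
    next
      fix f g assume f: "f \<in> PhiStar (Nb b)" and g: "g \<in> PhiStar (Nb b)" and fg: "dvdb b f g"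
      have d1: "f dvd frob_poly b (x f) - y f" by (rule K1[OF f])
      have d2: "f dvd frob_poly b (x g) - y g" using K1[OF g] dvdb_dvd[OF fg] by (auto intro: dvd_trans)
      have d3: "f dvd y g - y f" using y f g fg by (auto simp: invlim_def dest: dvdb_dvd)
      have eq: "frob_poly b (x g - x f) = (frob_poly b (x g) - y g) - (frob_poly b (x f) - y f) + (y g - y f)"
        by (simp add: frob_diff)
      have "f dvd frob_poly b (x g - x f)" unfolding eq by (intro dvd_add dvd_diff d1 d2 d3)
      hence "f dvd x g - x f" unfolding frob_poly_def by (rule frob_inj[OF b f])
      moreover have "x g - x f \<in> Zbq b" by (rule Zbq_diff[OF b xZ[OF g] xZ[OF f]])
      ultimately show "dvdb b f (x g - x f)" using dvdb_iff[OF b] fZ[OF f] by auto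
    qed
    moreover have "limeq b (Nb b) (Frob b x) y" unfolding limeq_def
    proof
      fix f assume f: "f \<in> PhiStar (Nb b)"
      have "Frob b x f - y f \<in> Zbq b" using frob_Zbq[OF b xZ[OF f]] yZ[OF f] b
        by (auto simp: Frob_def intro: Zbq_diff)
      thus "dvdb b f (Frob b x f - y f)" using K1[OF f] dvdb_iff[OF b] fZ[OF f] by (auto simp: Frob_def)
    qed
    ultimately show "\<exists>x\<in>invlim b (Nb b). limeq b (Nb b) (Frob b x) y" by blast
  qed
  show ?thesis using c1 c2 c3 c4 c5 c6 c7 c8 by blast
qed

end
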